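(* Let $X$ be a standard one-dimensional Brownian motion starting at $0$, $p$ the atomic proposition with $X(\omega),t\models_n p$ iff $X_t(\omega)\geq1$, and $\phi_1:=\Box_{(1,2)}(\Diamond_{(1,4)}p\wedge\lnot\Diamond_{(1,3)}p)$, $\phi_2:=(\Diamond_{(1,3)}\phi_1)\wedge(\lnot\Diamond_{(1,2)}\phi_1)\wedge(\lnot\Diamond_{(2,3)}\phi_1)$, $\phi_3:=\Diamond_{(1,2)}\phi_2$, $\psi:=(\lnot p)\wedge(\lnot\Diamond_{(0,8)}p)\wedge\phi_3$. Let $n\geq2$. Then $X(\omega),0\not\models_n\psi$ for every $\omega\in\Omega$.
   Context: $\mathbb{N}/n:=\{k/n : k\in\mathbb{N}\}$. Discrete semantics at $t\in\mathbb{N}/n$: $\lnot,\wedge$ classical; $X(\omega),t\models_n\Diamond_I\phi$ iff $\exists s\in I\cap\mathbb{N}/n$ with $X(\omega),t+s\models_n\phi$; $X(\omega),t\models_n\Box_I\phi$ iff $\forall s\in I\cap\mathbb{N}/n$, $X(\omega),t+s\models_n\phi$. *)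

theory Defs
  imports Complex_Main
begin

definition grid :: "nat \<Rightarrow> real set" where
  "grid n = {real k / real n | k. True}"

datatype form = P | Neg form | Conj form form | Dia "real set" form | Bx "real set" form

text \<open>Discrete semantics: sat n x t phi means x, t |=_n phi, where x is a sample path
  (x t = X_t(omega)); p holds at t iff x t >= 1.\<close>
fun sat :: "nat \<Rightarrow> (real \<Rightarrow> real) \<Rightarrow> real \<Rightarrow> form \<Rightarrow> bool" where
  "sat n x t P = (x t \<ge> 1)"
| "sat n x t (Neg \<phi>) = (\<not> sat n x t \<phi>)"
| "sat n x t (Conj \<phi> \<psi>) = (sat n x t \<phi> \<and> sat n x t \<psi>)"
| "sat n x t (Dia I \<phi>) = (\<exists>s \<in> I \<inter> grid n. sat n x (t + s) \<phi>)"
| "sat n x t (Bx I \<phi>) = (\<forall>s \<in> I \<inter> grid n. sat n x (t + s) \<phi>)"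

definition phi1 :: form where
  "phi1 = Bx {1<..<2} (Conj (Dia {1<..<4} P) (Neg (Dia {1<..<3} P)))"

definition phi2 :: form where
  "phi2 = Conj (Dia {1<..<3} phi1) (Conj (Neg (Dia {1<..<2} phi1)) (Neg (Dia {2<..<3} phi1)))"

definition phi3 :: form where
  "phi3 = Dia {1<..<2} phi2"

definition psi :: form where
  "psi = Conj (Neg P) (Conj (Neg (Dia {0<..<8} P)) phi3)"

end

theory Submission
  imports Defs
begin

lemma grid_add: "a \<in> grid n \<Longrightarrow> b \<in> grid n \<Longrightarrow> a + b \<in> grid n"
  unfolding grid_def
proof clarify
  fix k m :: nat
  show "\<exists>j. real k / real n + real m / real n = real j / real n \<and> True"
    by (rule exI[of _ "k+m"]) (simp add: add_divide_distrib)
qed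

lemma grid_diff: "n > 0 \<Longrightarrow> a \<in> grid n \<Longrightarrow> b \<in> grid n \<Longrightarrow> b \<le> a \<Longrightarrow> a - b \<in> grid n"
  unfolding grid_def
proof clarify
  fix k m :: nat
  assume n: "n > 0" and le: "real m / real n \<le> real k / real n"
  hence "m \<le> k" using n by (simp add: divide_le_cancel)
  thus "\<exists>j. real k / real n - real m / real n = real j / real n \<and> True"
    by (intro exI[of _ "k-m"]) (simp add: diff_divide_distrib of_nat_diff)
qed

lemma grid_nat: "n > 0 \<Longrightarrow> real m \<in> grid n"
  unfolding grid_def by (rule CollectI, rule exI[of _ "m*n"]) simp

lemma grid_h: "1 / real n \<in> grid n"
  unfolding grid_def by (rule CollectI, rule exI[of _ 1]) simp

lemma grid_pos: "n > 0 \<Longrightarrow> a \<in> grid n \<Longrightarrow> a > 0 \<Longrightarrow> a \<ge> 1 / real n"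
  unfolding grid_def
proof clarify
  fix k :: nat
  assume n: "n > 0" and "0 < real k / real n"
  hence "k \<ge> 1" by (cases k) auto
  thus "1 / real n \<le> real k / real n" using n by (simp add: divide_right_mono)
qed

lemma grid_disc: "n > 0 \<Longrightarrow> a \<in> grid n \<Longrightarrow> b \<in> grid n \<Longrightarrow> a < b \<Longrightarrow> a \<le> b - 1 / real n"
  using grid_pos[of n "b - a"] grid_diff[of n b a] by force

theorem lemma5p5:
  fixes X :: "'w \<Rightarrow> real \<Rightarrow> real" and n :: nat
  assumes "n \<ge> 2"
  shows "\<forall>\<omega>. \<not> sat n (X \<omega>) 0 psi"
proof
  fix \<omega>
  define x where "x = X \<omega>"
  define G where "G = grid n"
  define h where "h = 1 / real n"
  have n0: "n > 0" using assms by simp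
  have hpos: "h > 0" using n0 by (simp add: h_def)
  have hle: "h \<le> 1/2" using assms by (simp add: h_def field_simps)
  have hG: "h \<in> G" by (simp add: G_def h_def grid_h)
  have add: "a + b \<in> G" if "a \<in> G" "b \<in> G" for a b using that grid_add by (simp add: G_def)
  have dif: "a - b \<in> G" if "a \<in> G" "b \<in> G" "b \<le> a" for a b
    using that grid_diff n0 by (simp add: G_def)
  have natG: "real m \<in> G" for m using grid_nat n0 by (simp add: G_def)
  have disc: "a \<le> b - h" if "a \<in> G" "b \<in> G" "a < b" for a b
    using that grid_disc n0 by (simp add: G_def h_def)
  have oneG: "1 \<in> G" using natG[of 1] by simp
  have twoG: "2 \<in> G" using natG[of 2] by simp
  have threeG: "3 \<in> G" using natG[of 3] by simp
  have fourG: "4 \<in> G" using natG[of 4] by simp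
  have fiveG: "5 \<in> G" using natG[of 5] by simp
  define Phi1 where "Phi1 \<tau> = (\<forall>u\<in>{1<..<2} \<inter> G. (\<exists>v\<in>{1<..<4} \<inter> G. x (\<tau>+u+v) \<ge> 1)
        \<and> \<not> (\<exists>v\<in>{1<..<3} \<inter> G. x (\<tau>+u+v) \<ge> 1))" for \<tau>
  have p1: "sat n x \<tau> phi1 = Phi1 \<tau>" for \<tau>
    by (simp add: phi1_def Phi1_def G_def add.assoc)
  show "\<not> sat n (X \<omega>) 0 psi"
  proof
    assume "sat n (X \<omega>) 0 psi"
    hence S: "\<forall>s\<in>{0<..<8} \<inter> G. \<not> x s \<ge> 1"
      and "\<exists>s1\<in>{1<..<2} \<inter> G. sat n x s1 phi2"
      by (simp_all add: psi_def phi3_def x_def G_def)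
    then obtain s1 where s1: "s1 \<in> G" "1 < s1" "s1 < 2" and ph2: "sat n x s1 phi2" by auto
    from ph2 obtain s2 where s2: "s2 \<in> G" "1 < s2" "s2 < 3" and P1s2: "Phi1 (s1 + s2)"
      and N1: "\<forall>s\<in>{1<..<2} \<inter> G. \<not> Phi1 (s1 + s)"
      and N2: "\<forall>s\<in>{2<..<3} \<inter> G. \<not> Phi1 (s1 + s)"
      by (auto simp: phi2_def p1 G_def)
    have "s2 = 2"
    proof (rule ccontr)
      assume "s2 \<noteq> 2"
      hence "s2 < 2 \<or> s2 > 2" by linarith
      thus False
      proof
        assume "s2 < 2"
        hence "s2 \<in> {1<..<2} \<inter> G" using s2 by simp
        thus False using N1 P1s2 by blast
      next
        assume "s2 > 2"
        hence "s2 \<in> {2<..<3} \<inter> G" using s2 by simp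
        thus False using N2 P1s2 by blast
      qed
    qed
    define t where "t = s1 + 2"
    have P1: "Phi1 t" using P1s2 \<open>s2 = 2\<close> by (simp add: t_def)
    have t3: "3 < t" "t < 4" using s1 by (auto simp: t_def)
    have Nm: "\<not> Phi1 (t - h)"
    proof -
      have "2 - h \<in> {1<..<2} \<inter> G" using hpos hle dif[OF twoG hG] by simp
      hence "\<not> Phi1 (s1 + (2 - h))" using N1 by blast
      moreover have "s1 + (2 - h) = t - h" by (simp add: t_def)
      ultimately show ?thesis by simp
    qed
    have Np: "\<not> Phi1 (t + h)"
    proof -
      have "2 + h \<in> {2<..<3} \<inter> G" using hpos hle add[OF twoG hG] by simp
      hence "\<not> Phi1 (s1 + (2 + h))" using N2 by blast
      moreover have "s1 + (2 + h) = t + h" by (simp add: t_def)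
      ultimately show ?thesis by simp
    qed
    have forb: "\<not> x (t+u+v) \<ge> 1" if "u \<in> G" "1 < u" "u < 2" "v \<in> G" "1 < v" "v < 3" for u v
    proof -
      have "u \<in> {1<..<2} \<inter> G" "v \<in> {1<..<3} \<inter> G" using that by auto
      with P1[unfolded Phi1_def] show ?thesis by (meson bspec)
    qed
    have req: "\<exists>v\<in>{1<..<4} \<inter> G. x (t+u+v) \<ge> 1" if "u \<in> G" "1 < u" "u < 2" for u
    proof -
      have "u \<in> {1<..<2} \<inter> G" using that by auto
      with P1[unfolded Phi1_def] show ?thesis by (meson bspec)
    qed
    have u0: "1 + h \<in> G" "1 < 1 + h" "1 + h < 2" using add[OF oneG hG] hpos hle by auto
    obtain v where v: "v \<in> G" "1 < v" "v < 4" and Pw: "x (t+(1+h)+v) \<ge> 1"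
      using req[OF u0] by auto
    have v3: "v \<ge> 3" using forb[OF u0 v(1) v(2)] Pw by force
    show False
    proof (cases "x (t + 5 - h) \<ge> 1")
      case True
      have "\<exists>u\<in>{1<..<2} \<inter> G. (\<forall>v\<in>{1<..<4} \<inter> G. \<not> x (t-h+u+v) \<ge> 1) \<or> (\<exists>v\<in>{1<..<3} \<inter> G. x (t-h+u+v) \<ge> 1)"
        using Nm unfolding Phi1_def by blast
      then obtain u where uu: "u \<in> {1<..<2} \<inter> G" and
        D: "(\<forall>v\<in>{1<..<4} \<inter> G. \<not> x (t-h+u+v) \<ge> 1) \<or> (\<exists>v\<in>{1<..<3} \<inter> G. x (t-h+u+v) \<ge> 1)"
        by blast
      have u: "u \<in> G" "1 < u" "u < 2" using uu by auto
      from D show False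
      proof
        assume A: "\<forall>v\<in>{1<..<4} \<inter> G. \<not> x (t-h+u+v) \<ge> 1"
        show False
        proof (cases "u - h > 1")
          case True
          have "u - h \<in> G" using dif[OF u(1) hG] hle u by auto
          moreover have "u - h < 2" using u hpos by simp
          ultimately obtain v' where "v' \<in> {1<..<4} \<inter> G" "x (t+(u-h)+v') \<ge> 1"
            using req[of "u-h"] True by blast
          moreover have "t+(u-h)+v' = t-h+u+v'" by simp
          ultimately show False using A by metis
        next
          case False
          have "5 - u \<in> {1<..<4} \<inter> G" using False u dif[OF fiveG u(1)] hle by auto
          moreover have "t - h + u + (5 - u) = t + 5 - h" by simp
          ultimately show False using A True by metis
        qed
      next
        assume "\<exists>v\<in>{1<..<3} \<inter> G. x (t-h+u+v) \<ge> 1"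
        then obtain v' where v': "v' \<in> G" "1 < v'" "v' < 3" and Pr: "x (t-h+u+v') \<ge> 1" by auto
        have tG: "t \<in> G" using add[OF s1(1) twoG] by (simp add: t_def)
        have rG: "t-h+u+v' \<in> G"
          using add[OF add[OF dif[OF tG hG] u(1)] v'(1)] hle t3 by simp
        show False
        proof (cases "t-h+u+v' < 8")
          case True
          have "t-h+u+v' \<in> {0<..<8} \<inter> G" using True rG t3 u v' hle by simp
          thus False using S Pr by blast
        next
          case False
          show False
          proof (cases "u - h > 1")
            case True
            have "u - h \<in> G" using dif[OF u(1) hG] hle u by auto
            have "\<not> x (t+(u-h)+v') \<ge> 1" using forb[of "u-h" v'] \<open>u - h \<in> G\<close> True u v' hpos by simp
            moreover have "t+(u-h)+v' = t-h+u+v'" by simp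
            ultimately show False using Pr by simp
          next
            case c2: False
            show False
            proof (cases "v' - h > 1")
              case True
              have "v' - h \<in> G" using dif[OF v'(1) hG] hle v' by auto
              have "\<not> x (t+u+(v'-h)) \<ge> 1" using forb[of u "v'-h"] \<open>v' - h \<in> G\<close> True u v' hpos by simp
              moreover have "t+u+(v'-h) = t-h+u+v'" by simp
              ultimately show False using Pr by simp
            next
              case False
              thus False using c2 \<open>\<not> t-h+u+v' < 8\<close> t3 hle by linarith
            qed
          qed
        qed
      qed
    next
      case False
      note B = False
      have "\<exists>u\<in>{1<..<2} \<inter> G. (\<forall>v\<in>{1<..<4} \<inter> G. \<not> x (t+h+u+v) \<ge> 1) \<or> (\<exists>v\<in>{1<..<3} \<inter> G. x (t+h+u+v) \<ge> 1)"
        using Np unfolding Phi1_def by blast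
      then obtain u where uu: "u \<in> {1<..<2} \<inter> G" and
        D: "(\<forall>v\<in>{1<..<4} \<inter> G. \<not> x (t+h+u+v) \<ge> 1) \<or> (\<exists>v\<in>{1<..<3} \<inter> G. x (t+h+u+v) \<ge> 1)"
        by blast
      have u: "u \<in> G" "1 < u" "u < 2" using uu by auto
      have uhG: "u + h \<in> G" using add[OF u(1) hG] .
      from D show False
      proof
        assume A: "\<forall>v\<in>{1<..<4} \<inter> G. \<not> x (t+h+u+v) \<ge> 1"
        show False
        proof (cases "u + h < 2")
          case True
          then obtain v' where "v' \<in> {1<..<4} \<inter> G" "x (t+(u+h)+v') \<ge> 1"
            using req[OF uhG _ True] u hpos by auto
          moreover have "t+(u+h)+v' = t+h+u+v'" by simp
          ultimately show False using A by metis
        next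
          case False
          have "u \<le> 2 - h" using disc[OF u(1) twoG u(3)] .
          hence ue: "u = 2 - h" using False by simp
          have "v - 1 + h \<in> G" using add[OF dif[OF v(1) oneG] hG] v by simp
          hence "v - 1 + h \<in> {1<..<4} \<inter> G" using v v3 hle hpos by auto
          moreover have "t + h + u + (v - 1 + h) = t + (1 + h) + v" using ue by simp
          ultimately show False using A Pw by metis
        qed
      next
        assume "\<exists>v\<in>{1<..<3} \<inter> G. x (t+h+u+v) \<ge> 1"
        then obtain v' where v': "v' \<in> G" "1 < v'" "v' < 3" and Pr: "x (t+h+u+v') \<ge> 1" by auto
        show False
        proof (cases "u + h < 2")
          case True
          have "\<not> x (t+(u+h)+v') \<ge> 1" using forb[OF uhG _ True v'] u hpos by simp
          moreover have "t+(u+h)+v' = t+h+u+v'" by simp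
          ultimately show False using Pr by simp
        next
          case c2: False
          show False
          proof (cases "v' + h < 3")
            case True
            have "\<not> x (t+u+(v'+h)) \<ge> 1" using forb[OF u add[OF v'(1) hG] _ True] v' hpos by simp
            moreover have "t+u+(v'+h) = t+h+u+v'" by simp
            ultimately show False using Pr by simp
          next
            case False
            have "u \<le> 2 - h" using disc[OF u(1) twoG u(3)] .
            moreover have "v' \<le> 3 - h" using disc[OF v'(1) threeG v'(3)] .
            ultimately have "t+h+u+v' = t + 5 - h" using c2 False by simp
            thus False using B Pr by metis
          qed
        qed
      qed
    qed
  qed
qed

end
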